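(* Let $T\ge 2$ and let $A$ be any finite-state protocol (as in the context) with $k$ states. Then there exist a connected graph with at most $k+1$ nodes and an initial assignment of states of $A$ to its nodes such that the execution of $A$ on this graph from this assignment is never synchronized.
   Context: Finite-state beeping protocols. A protocol $A$ consists of a finite set of states $Q$ (with $k=|Q|$), a subset $B\subseteq Q$ of beeping states, a clock map $\kappa:Q\to\{0,\dots,T-1\}$, a transition map $\sigma_B: B\to Q$ for beeping states, and a transition map $\sigma_L:(Q\setminus B)\times\{\text{beep},\text{silence}\}\to Q$ for listening states. Every node of a graph runs the same protocol. Execution on a finite connected undirected graph $G$ from an initial assignment of states: in each round, each node in a state of $B$ beeps and moves to $\sigma_B$ of its state; each other node listens and moves to $\sigma_L(q,\text{beep})$ if at least one neighbor beeps in that round and to $\sigma_L(q,\text{silence})$ otherwise. The clock value of a node in state $q$ is $\kappa(q)$. An execution is \emph{synchronized from round $t_0$} if for all rounds $t\ge t_0$: all nodes have the same clock value in round $t$, the clock values in round $t+1$ equal those in round $t$ plus $1$ modulo $T$, and a node beeps in round $t$ if and only if its clock value in round $t$ is $0$. The execution is \emph{eventually synchronized} if it is synchronized from some round $t_0$. *)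

theory Defs
  imports Main
begin

(* A finite-state beeping protocol: states = the finite type 'q (k = card UNIV),
   beeping states B, clock map kap (values < T), transition maps sigB (used on beeping states)
   and sigL (used on listening states; bool True = beep heard, False = silence). *)
definition connected_graph :: "nat set \<Rightarrow> (nat \<Rightarrow> nat \<Rightarrow> bool) \<Rightarrow> bool" where
  "connected_graph V E \<longleftrightarrow>
     finite V \<and> V \<noteq> {} \<and>
     (\<forall>u v. E u v \<longrightarrow> u \<in> V \<and> v \<in> V) \<and>
     (\<forall>u v. E u v \<longrightarrow> E v u) \<and> (\<forall>v. \<not> E v v) \<and>
     (\<forall>u\<in>V. \<forall>v\<in>V. (u, v) \<in> {(x, y). E x y}\<^sup>*)"

fun exec ::
  "nat set \<Rightarrow> (nat \<Rightarrow> nat \<Rightarrow> bool) \<Rightarrow> 'q set \<Rightarrow> ('q \<Rightarrow> 'q) \<Rightarrow> ('q \<Rightarrow> bool \<Rightarrow> 'q)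
   \<Rightarrow> (nat \<Rightarrow> 'q) \<Rightarrow> nat \<Rightarrow> nat \<Rightarrow> 'q" where
  "exec V E B sigB sigL init 0 = init"
| "exec V E B sigB sigL init (Suc t) =
     (\<lambda>v. let q = exec V E B sigB sigL init t v in
          if q \<in> B then sigB q
          else sigL q (\<exists>u\<in>V. E v u \<and> exec V E B sigB sigL init t u \<in> B))"

definition synchronized_from ::
  "nat \<Rightarrow> nat set \<Rightarrow> 'q set \<Rightarrow> ('q \<Rightarrow> nat) \<Rightarrow> (nat \<Rightarrow> nat \<Rightarrow> 'q) \<Rightarrow> nat \<Rightarrow> bool" where
  "synchronized_from T V B kap s t0 \<longleftrightarrow>
     (\<forall>t\<ge>t0.
        (\<forall>u\<in>V. \<forall>v\<in>V. kap (s t u) = kap (s t v)) \<and>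
        (\<forall>v\<in>V. kap (s (Suc t) v) = (kap (s t v) + 1) mod T) \<and>
        (\<forall>v\<in>V. s t v \<in> B \<longleftrightarrow> kap (s t v) = 0))"

definition eventually_synchronized ::
  "nat \<Rightarrow> nat set \<Rightarrow> 'q set \<Rightarrow> ('q \<Rightarrow> nat) \<Rightarrow> (nat \<Rightarrow> nat \<Rightarrow> 'q) \<Rightarrow> bool" where
  "eventually_synchronized T V B kap s \<longleftrightarrow> (\<exists>t0. synchronized_from T V B kap s t0)"

end

theory Submission
  imports Defs
begin


lemma sync_at:
  assumes "synchronized_from T V B kap s t0" "t0 \<le> t"
  shows "\<And>u v. u\<in>V \<Longrightarrow> v\<in>V \<Longrightarrow> kap (s t u) = kap (s t v)"
    "\<And>v. v\<in>V \<Longrightarrow> kap (s (Suc t) v) = (kap (s t v) + 1) mod T"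
    "\<And>v. v\<in>V \<Longrightarrow> s t v \<in> B \<longleftrightarrow> kap (s t v) = 0"
  using assms unfolding synchronized_from_def by blast+

lemma sync_clock:
  assumes S: "synchronized_from T V B kap s t0" and v: "v \<in> V" and kp: "\<forall>q. kap q < T"
  shows "kap (s (t0 + j) v) = (kap (s t0 v) + j) mod T"
proof (induction j)
  case 0 then show ?case using kp by simp
next
  case (Suc j)
  have "kap (s (Suc (t0 + j)) v) = (kap (s (t0+j) v) + 1) mod T"
    using sync_at(2)[OF S _ v] by simp
  then show ?case using Suc by (simp add: mod_Suc_eq)
qed

lemma sync_beeps:
  assumes S: "synchronized_from T V B kap s t0" and v: "v \<in> V" and kp: "\<forall>q. kap q < T"
  shows "\<exists>t\<ge>t0. s t v \<in> B"
proof -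
  let ?j = "T - kap (s t0 v)"
  have "kap (s (t0 + ?j) v) = (kap (s t0 v) + ?j) mod T" using sync_clock[OF S v kp] .
  also have "kap (s t0 v) + ?j = T" using kp by (simp add: less_imp_le_nat)
  finally have "kap (s (t0 + ?j) v) = 0" by simp
  hence "s (t0 + ?j) v \<in> B" using sync_at(3)[OF S _ v] by simp
  then show ?thesis by (intro exI[of _ "t0 + ?j"]) auto
qed

lemma never_beep_not_sync:
  assumes "\<forall>t. \<forall>v\<in>V. s t v \<notin> B" "V \<noteq> {}" "\<forall>q. kap q < T"
  shows "\<not> eventually_synchronized T V B kap s"
  using assms sync_beeps unfolding eventually_synchronized_def by blast

lemma always_beep_not_sync:
  assumes A: "\<forall>t. \<exists>v\<in>V. s t v \<in> B" and T: "T \<ge> 2"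
  shows "\<not> eventually_synchronized T V B kap s"
proof
  assume "eventually_synchronized T V B kap s"
  then obtain t0 where S: "synchronized_from T V B kap s t0"
    unfolding eventually_synchronized_def by blast
  obtain u where u: "u \<in> V" "s t0 u \<in> B" using A by blast
  obtain v where v: "v \<in> V" "s (Suc t0) v \<in> B" using A by blast
  have "kap (s t0 u) = 0" using sync_at(3)[OF S _ u(1)] u(2) by simp
  hence "kap (s t0 v) = 0" using sync_at(1)[OF S _ u(1) v(1)] by simp
  hence "kap (s (Suc t0) v) = 1" using sync_at(2)[OF S _ v(1)] T by simp
  moreover have "kap (s (Suc t0) v) = 0" using sync_at(3)[OF S _ v(1)] v(2) by simp
  ultimately show False by simp
qed

lemma pigeon_cycle:
  fixes h :: "'q::finite \<Rightarrow> 'q"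
  shows "\<exists>c n. 0 < n \<and> n \<le> card (UNIV::'q set) \<and> (h^^n) c = c \<and> (\<exists>i. c = (h^^i) q0)"
proof -
  have "\<not> inj_on (\<lambda>i. (h^^i) q0) {0..card (UNIV::'q set)}"
  proof
    assume "inj_on (\<lambda>i. (h^^i) q0) {0..card (UNIV::'q set)}"
    from card_inj_on_le[OF this, of UNIV] show False by simp
  qed
  then obtain i j where ij: "i \<in> {0..card (UNIV::'q set)}" "j \<in> {0..card (UNIV::'q set)}"
     "i \<noteq> j" "(h^^i) q0 = (h^^j) q0"
    unfolding inj_on_def by blast
  then obtain a b where ab: "a < b" "b \<le> card (UNIV::'q set)" "(h^^a) q0 = (h^^b) q0"
    by (metis atLeastAtMost_iff linorder_neqE_nat)
  have "(h^^(b-a)) ((h^^a) q0) = (h^^((b-a)+a)) q0"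
    by (simp only: funpow_add comp_apply)
  also have "(b-a)+a = b" using ab by simp
  finally have "(h^^(b-a)) ((h^^a) q0) = (h^^a) q0" using ab by simp
  then show ?thesis using ab
    by (intro exI[of _ "(h^^a) q0"] exI[of _ "b-a"]) auto
qed

lemma cycle_mod:
  assumes "(h^^n) c = c"
  shows "(h^^m) c = (h^^(m mod n)) c"
proof -
  have "\<And>a b. (h^^(a*n + b)) c = (h^^b) c"
  proof -
    fix a b show "(h^^(a*n + b)) c = (h^^b) c"
    proof (induction a)
      case (Suc a)
      have e: "Suc a*n + b = (a*n+b)+n" by simp
      have "(h^^(Suc a*n + b)) c = (h^^(a*n+b)) ((h^^n) c)"
        unfolding e by (simp only: funpow_add comp_apply)
      then show ?case using Suc assms by simp
    qed simp
  qed
  then show ?thesis by (metis div_mult_mod_eq)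
qed

lemma cycle_B:
  fixes h :: "'q::finite \<Rightarrow> 'q"
  assumes "\<forall>q. \<exists>i. (h^^i) q \<in> B"
  shows "\<exists>c n. c \<in> B \<and> 0 < n \<and> n \<le> card (UNIV::'q set) \<and> (h^^n) c = c"
proof -
  obtain c0 n where c0: "0 < n" "n \<le> card (UNIV::'q set)" "(h^^n) c0 = c0"
    using pigeon_cycle[of h] by blast
  obtain i where i: "(h^^i) c0 \<in> B" using assms by blast
  have "(h^^n) ((h^^i) c0) = (h^^i) ((h^^n) c0)"
    by (metis add.commute comp_apply funpow_add)
  then show ?thesis using c0 i by (intro exI[of _ "(h^^i) c0"] exI[of _ n]) auto
qed

lemma cycle_hit:
  assumes "(h^^n) c = c" "0 < n"
  shows "(h^^((n - t mod n) mod n + t)) c = c" "(n - t mod n) mod n < n"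
proof -
  have "((n - t mod n) mod n + t) mod n = 0"
  proof -
    have r: "t mod n < n" using assms(2) by simp
    have "((n - t mod n) mod n + t) mod n = ((n - t mod n) mod n + t mod n) mod n"
      by (simp add: mod_add_right_eq)
    also have "\<dots> = ((n - t mod n) + t mod n) mod n"
      by (simp add: mod_add_left_eq)
    also have "(n - t mod n) + t mod n = n" using r by simp
    finally show ?thesis by simp
  qed
  then show "(h^^((n - t mod n) mod n + t)) c = c" using cycle_mod[OF assms(1), of "(n - t mod n) mod n + t"] by simp
  show "(n - t mod n) mod n < n" using assms(2) by simp
qed


theorem mainTheorem11:
  fixes T :: nat and B :: "'q::finite set" and kap :: "'q \<Rightarrow> nat"
    and sigB :: "'q \<Rightarrow> 'q" and sigL :: "'q \<Rightarrow> bool \<Rightarrow> 'q"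
  assumes "T \<ge> 2"
    and "\<forall>q. kap q < T"
  shows "\<exists>V E init. connected_graph V E \<and> card V \<le> card (UNIV :: 'q set) + 1 \<and>
           \<not> eventually_synchronized T V B kap (exec V E B sigB sigL init)"
proof -
  define f where "f q = (if q \<in> B then sigB q else sigL q False)" for q
  define g where "g q = (if q \<in> B then sigB q else sigL q True)" for q
  show ?thesis
  proof (cases "\<exists>q. \<forall>i. (f^^i) q \<notin> B")
    case True
    then obtain q where q: "\<forall>i. (f^^i) q \<notin> B" by blast
    define V :: "nat set" where "V = {0}"
    define E :: "nat \<Rightarrow> nat \<Rightarrow> bool" where "E = (\<lambda>_ _. False)"
    define init :: "nat \<Rightarrow> 'q" where "init = (\<lambda>_. q)"
    have ex: "exec V E B sigB sigL init t 0 = (f^^t) q" for t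
    proof (induction t)
      case 0 then show ?case by (simp add: init_def)
    next
      case (Suc t) then show ?case by (simp add: E_def f_def Let_def)
    qed
    have "connected_graph V E" unfolding connected_graph_def V_def E_def by simp
    moreover have "card V \<le> card (UNIV :: 'q set) + 1" unfolding V_def by simp
    moreover have "\<not> eventually_synchronized T V B kap (exec V E B sigB sigL init)"
      by (rule never_beep_not_sync) (use ex q assms(2) in \<open>auto simp: V_def\<close>)
    ultimately show ?thesis by blast
  next
    case False
    then have "\<forall>q. \<exists>i. (f^^i) q \<in> B" by blast
    from cycle_B[OF this] obtain c n where c: "c \<in> B" "0 < n" "n \<le> card (UNIV::'q set)" "(f^^n) c = c"
      by blast
    show ?thesis
    proof (cases "\<exists>d. \<forall>i. (g^^i) d \<notin> B")
      case True
      then obtain d where d: "\<forall>i. (g^^i) d \<notin> B" by blast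
      define V :: "nat set" where "V = {0..n}"
      define E :: "nat \<Rightarrow> nat \<Rightarrow> bool" where
        "E = (\<lambda>u v. (u = 0 \<and> 1 \<le> v \<and> v \<le> n) \<or> (v = 0 \<and> 1 \<le> u \<and> u \<le> n))"
      define init :: "nat \<Rightarrow> 'q" where "init = (\<lambda>v. if v = 0 then d else (f^^(v-1)) c)"
      define w where "w t = Suc ((n - t mod n) mod n)" for t
      have w: "w t \<in> V" "w t \<noteq> 0" "(f^^(w t - 1 + t)) c = c" for t
        using cycle_hit[OF c(4) c(2), of t] unfolding w_def V_def by auto
      have ex: "\<forall>v\<in>V. exec V E B sigB sigL init t v = (if v = 0 then (g^^t) d else (f^^(v-1+t)) c)" for t
      proof (induction t)
        case 0 then show ?case by (simp add: init_def)
      next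
        case (Suc t)
        show ?case
        proof
          fix v assume v: "v \<in> V"
          show "exec V E B sigB sigL init (Suc t) v = (if v = 0 then (g^^Suc t) d else (f^^(v-1+Suc t)) c)"
          proof (cases "v = 0")
            case True
            have nb: "(g^^t) d \<notin> B" using d by blast
            have hear: "\<exists>u\<in>V. E v u \<and> exec V E B sigB sigL init t u \<in> B"
              using w[of t] Suc.IH True c(1) unfolding E_def V_def by (intro bexI[of _ "w t"]) auto
            show ?thesis using Suc.IH v True nb hear by (simp add: Let_def g_def)
          next
            case False
            have nohear: "\<not> (\<exists>u\<in>V. E v u \<and> exec V E B sigB sigL init t u \<in> B)"
            proof
              assume "\<exists>u\<in>V. E v u \<and> exec V E B sigB sigL init t u \<in> B"
              then obtain u where "u \<in> V" "E v u" "exec V E B sigB sigL init t u \<in> B" by blast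
              then have "u = 0" using False unfolding E_def by auto
              then show False using Suc.IH \<open>u \<in> V\<close> \<open>exec V E B sigB sigL init t u \<in> B\<close> d by auto
            qed
            have e: "v - 1 + Suc t = Suc (v - 1 + t)" by simp
            have st: "exec V E B sigB sigL init (Suc t) v = f (exec V E B sigB sigL init t v)"
              using nohear unfolding f_def by (simp only: exec.simps Let_def)
            have ih: "exec V E B sigB sigL init t v = (f^^(v-1+t)) c" using Suc.IH v False by simp
            have ff: "(f^^(v-1+Suc t)) c = f ((f^^(v-1+t)) c)" by (simp only: e funpow.simps comp_apply)
            show ?thesis using False by (simp only: st ih ff if_False)
          qed
        qed
      qed
      have "connected_graph V E"
      proof -
        have to0: "(u, 0) \<in> {(x, y). E x y}\<^sup>*" "(0, u) \<in> {(x, y). E x y}\<^sup>*" if "u \<in> V" for u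
        proof -
          have "(u, 0) \<in> {(x, y). E x y}\<^sup>* \<and> (0, u) \<in> {(x, y). E x y}\<^sup>*"
          proof (cases "u = 0")
            case False
            then have "E u 0" "E 0 u" using that unfolding E_def V_def by auto
            then show ?thesis by auto
          qed simp
          then show "(u, 0) \<in> {(x, y). E x y}\<^sup>*" "(0, u) \<in> {(x, y). E x y}\<^sup>*" by auto
        qed
        show ?thesis unfolding connected_graph_def
        proof (intro conjI ballI allI impI)
          fix u v assume "u \<in> V" "v \<in> V"
          then show "(u, v) \<in> {(x, y). E x y}\<^sup>*" using to0 by (meson rtrancl_trans)
        qed (auto simp: V_def E_def)
      qed
      moreover have "card V \<le> card (UNIV :: 'q set) + 1" unfolding V_def using c(3) by simp
      moreover have "\<not> eventually_synchronized T V B kap (exec V E B sigB sigL init)"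
      proof (rule always_beep_not_sync[OF _ assms(1)])
        show "\<forall>t. \<exists>v\<in>V. exec V E B sigB sigL init t v \<in> B"
        proof
          fix t show "\<exists>v\<in>V. exec V E B sigB sigL init t v \<in> B"
            using ex[of t] w[of t] c(1) by (intro bexI[of _ "w t"]) auto
        qed
      qed
      ultimately show ?thesis by blast
    next
      case False
      then have "\<forall>q. \<exists>i. (g^^i) q \<in> B" by blast
      from cycle_B[OF this] obtain c' n' where c': "c' \<in> B" "0 < n'" "n' \<le> card (UNIV::'q set)" "(g^^n') c' = c'"
        by blast
      define V :: "nat set" where "V = {0..<n'}"
      define E :: "nat \<Rightarrow> nat \<Rightarrow> bool" where "E = (\<lambda>u v. u \<noteq> v \<and> u < n' \<and> v < n')"
      define init :: "nat \<Rightarrow> 'q" where "init = (\<lambda>v. (g^^v) c')"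
      define w where "w t = (n' - t mod n') mod n'" for t
      have w: "w t \<in> V" "(g^^(w t + t)) c' = c'" for t
        using cycle_hit[OF c'(4) c'(2), of t] unfolding w_def V_def by auto
      have ex: "\<forall>v\<in>V. exec V E B sigB sigL init t v = (g^^(v+t)) c'" for t
      proof (induction t)
        case 0 then show ?case by (simp add: init_def)
      next
        case (Suc t)
        show ?case
        proof
          fix v assume v: "v \<in> V"
          have ih: "exec V E B sigB sigL init t v = (g^^(v+t)) c'" using Suc.IH v by simp
          have st: "exec V E B sigB sigL init (Suc t) v = g (exec V E B sigB sigL init t v)"
          proof (cases "(g^^(v+t)) c' \<in> B")
            case True
            then have qB: "exec V E B sigB sigL init t v \<in> B" using ih by simp
            show ?thesis by (simp add: Let_def g_def qB)
          next
            case False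
            then have qB: "exec V E B sigB sigL init t v \<notin> B" using ih by simp
            have "w t \<noteq> v" using False w[of t] c'(1) by auto
            then have hear: "\<exists>u\<in>V. E v u \<and> exec V E B sigB sigL init t u \<in> B"
              using w[of t] Suc.IH v c'(1) unfolding E_def V_def by (intro bexI[of _ "w t"]) auto
            show ?thesis using hear qB by (simp add: Let_def g_def)
          qed
          have ff: "(g^^(v+Suc t)) c' = g ((g^^(v+t)) c')" by simp
          show "exec V E B sigB sigL init (Suc t) v = (g^^(v+Suc t)) c'"
            by (simp only: st ih ff)
        qed
      qed
      have "connected_graph V E"
        unfolding connected_graph_def
      proof (intro conjI ballI allI impI)
        fix u v assume "u \<in> V" "v \<in> V"
        then show "(u, v) \<in> {(x, y). E x y}\<^sup>*"
          by (cases "u = v") (auto simp: E_def V_def intro: r_into_rtrancl)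
      qed (use c'(2) in \<open>auto simp: V_def E_def\<close>)
      moreover have "card V \<le> card (UNIV :: 'q set) + 1" unfolding V_def using c'(3) by simp
      moreover have "\<not> eventually_synchronized T V B kap (exec V E B sigB sigL init)"
      proof (rule always_beep_not_sync[OF _ assms(1)])
        show "\<forall>t. \<exists>v\<in>V. exec V E B sigB sigL init t v \<in> B"
        proof
          fix t show "\<exists>v\<in>V. exec V E B sigB sigL init t v \<in> B"
            using ex[of t] w[of t] c'(1) by (intro bexI[of _ "w t"]) auto
        qed
      qed
      ultimately show ?thesis by blast
    qed
  qed
qed

end
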